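(* If a collection $\mathcal Q$ of probability measures on $\{0,1\}^{\mathbb N}$ is non-separable in its means, then there exists $\gamma>0$ such that $\mathrm{Mean}(\mathcal Q)$ is infinitely sequentially $\gamma$-fat-shattered.
   Context: For a probability measure $\mu$ on $\{0,1\}^{\mathbb N}$, $\mathrm{Mean}(\mu)\in[0,1]^{\mathbb N}$ is the vector whose $j$-th coordinate is $\mathbb E[X_j]$ for $X\sim\mu$; $\mathrm{Mean}(\mathcal Q)=\{\mathrm{Mean}(\mu):\mu\in\mathcal Q\}$. A countable $\varepsilon$-cover of $\mathrm{Mean}(\mathcal Q)$ is a countable set $C\subset[0,1]^{\mathbb N}$ such that every $q\in\mathrm{Mean}(\mathcal Q)$ has some $p\in C$ with $\|q-p\|_\infty<\varepsilon$; $\mathcal Q$ is non-separable in its means if for some $\varepsilon>0$ no countable $\varepsilon$-cover exists. For $M\subseteq[0,1]^{\mathbb N}$, $\gamma>0$ and $d\in\mathbb N$, a $\gamma$-shattered tree of depth $d$ for $M$ is an assignment, to each node $v$ of the complete binary tree of depth $d$ (nodes identified with binary strings of length $0,1,\dots,d-1$), of a coordinate $i_v\in\mathbb N$ and a value $r_v\in(0,1)$, such that for every binary string $(b_1,\dots,b_d)$ there exists $q\in M$ with, for each $k=1,\dots,d$ and $v=(b_1,\dots,b_{k-1})$: $q_{i_v}\le r_v-\gamma$ if $b_k=0$ and $q_{i_v}\ge r_v+\gamma$ if $b_k=1$. $M$ is infinitely sequentially $\gamma$-fat-shattered if for every $d\in\mathbb N$ there is a $\gamma$-shattered tree of depth $d$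 for $M$. *)

theory Defs
  imports "HOL-Probability.Probability"
begin

text \<open>The Cantor space {0,1}^N, with {0,1} rendered as bool (True = 1),
  equipped with the product sigma-algebra.\<close>
definition cantor_space :: "(nat \<Rightarrow> bool) measure" where
  "cantor_space = (\<Pi>\<^sub>M j\<in>(UNIV::nat set). count_space (UNIV::bool set))"

definition prob_measures_cantor :: "(nat \<Rightarrow> bool) measure set" where
  "prob_measures_cantor = {\<mu>. prob_space \<mu> \<and> sets \<mu> = sets cantor_space}"

definition Mean :: "(nat \<Rightarrow> bool) measure \<Rightarrow> (nat \<Rightarrow> real)" where
  "Mean \<mu> = (\<lambda>j. \<integral>x. (if x j then 1 else 0) \<partial>\<mu>)"

definition sup_dist :: "(nat \<Rightarrow> real) \<Rightarrow> (nat \<Rightarrow> real) \<Rightarrow> real" where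
  "sup_dist q p = (SUP j. \<bar>q j - p j\<bar>)"

definition countable_eps_cover :: "real \<Rightarrow> (nat \<Rightarrow> real) set \<Rightarrow> (nat \<Rightarrow> real) set \<Rightarrow> bool" where
  "countable_eps_cover \<epsilon> M C \<longleftrightarrow>
     countable C \<and> (\<forall>p\<in>C. \<forall>j. p j \<in> {0..1}) \<and>
     (\<forall>q\<in>M. \<exists>p\<in>C. sup_dist q p < \<epsilon>)"

definition non_separable_in_means :: "(nat \<Rightarrow> bool) measure set \<Rightarrow> bool" where
  "non_separable_in_means Q \<longleftrightarrow>
     (\<exists>\<epsilon>>0. \<not> (\<exists>C. countable_eps_cover \<epsilon> (Mean ` Q) C))"

text \<open>Nodes of the complete binary tree of depth d are bool lists of length < d.
  The node reached after the first k-1 bits of a path b is take (k-1) b.\<close>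
definition shattered_tree ::
  "(nat \<Rightarrow> real) set \<Rightarrow> real \<Rightarrow> nat \<Rightarrow> (bool list \<Rightarrow> nat) \<Rightarrow> (bool list \<Rightarrow> real) \<Rightarrow> bool" where
  "shattered_tree M \<gamma> d i r \<longleftrightarrow>
     (\<forall>v. length v < d \<longrightarrow> r v \<in> {0<..<1}) \<and>
     (\<forall>b. length b = d \<longrightarrow>
        (\<exists>q\<in>M. \<forall>k<d.
            (\<not> b ! k \<longrightarrow> q (i (take k b)) \<le> r (take k b) - \<gamma>) \<and>
            (b ! k \<longrightarrow> q (i (take k b)) \<ge> r (take k b) + \<gamma>)))"

definition inf_seq_fat_shattered :: "real \<Rightarrow> (nat \<Rightarrow> real) set \<Rightarrow> bool" where
  "inf_seq_fat_shattered \<gamma> M \<longleftrightarrow> (\<forall>d::nat. \<exists>i r. shattered_tree M \<gamma> d i r)"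

end

theory Submission
  imports Defs
begin

definition smallc :: "real \<Rightarrow> (nat \<Rightarrow> real) set \<Rightarrow> bool" where
  "smallc e S \<longleftrightarrow> (\<exists>C. countable_eps_cover e S C)"

lemma small_empty: "smallc e {}"
  unfolding smallc_def countable_eps_cover_def by (rule exI[of _ "{}"]) simp

lemma small_sub: "smallc e T \<Longrightarrow> S \<subseteq> T \<Longrightarrow> smallc e S"
  unfolding smallc_def countable_eps_cover_def by (meson subsetD)

lemma small_Un: "smallc e S \<Longrightarrow> smallc e T \<Longrightarrow> smallc e (S \<union> T)"
proof -
  assume "smallc e S" "smallc e T"
  then obtain C D where "countable_eps_cover e S C" "countable_eps_cover e T D"
    unfolding smallc_def by blast
  then have "countable_eps_cover e (S \<union> T) (C \<union> D)"
    unfolding countable_eps_cover_def by auto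
  then show ?thesis unfolding smallc_def by blast
qed

lemma small_UN:
  assumes "\<And>n::nat. smallc e (S n)" shows "smallc e (\<Union>n. S n)"
proof -
  from assms obtain C where C: "\<And>n. countable_eps_cover e (S n) (C n)"
    unfolding smallc_def by metis
  have "countable_eps_cover e (\<Union>n. S n) (\<Union>n. C n)"
    using C unfolding countable_eps_cover_def by fastforce
  then show ?thesis unfolding smallc_def by blast
qed

lemma small_point:
  assumes "\<forall>j. c j \<in> {0..1}" "\<And>q j. q \<in> S \<Longrightarrow> \<bar>q j - c j\<bar> \<le> t" "t < e"
  shows "smallc e S"
proof -
  have "sup_dist q c < e" if "q \<in> S" for q
  proof -
    have "sup_dist q c \<le> t" unfolding sup_dist_def
      by (rule cSUP_least) (use assms(2) that in auto)
    then show ?thesis using assms(3) by linarith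
  qed
  then have "countable_eps_cover e S {c}"
    unfolding countable_eps_cover_def using assms(1) by auto
  then show ?thesis unfolding smallc_def by blast
qed

lemma split:
  assumes e: "e > 0" and S01: "\<forall>q\<in>S. \<forall>j. q j \<in> {0..1}" and big: "\<not> smallc e S"
  shows "\<exists>i r. r \<in> {0<..<1} \<and> \<not> smallc e {q\<in>S. q i \<le> r - e/4}
     \<and> \<not> smallc e {q\<in>S. q i \<ge> r + e/4}"
proof (rule ccontr)
  define g where "g = e/4"
  have g: "g > 0" using e g_def by simp
  assume "\<not> ?thesis"
  then have H: "\<And>i r. r \<in> {0<..<1} \<Longrightarrow> smallc e {q\<in>S. q i \<le> r - g} \<or> smallc e {q\<in>S. q i \<ge> r + g}"
    unfolding g_def by blast
  define L where "L i a = {q\<in>S. q i \<le> a}" for i a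
  define K where "K i = (LEAST k::nat. \<not> smallc e (L i (real k * g)))" for i
  have ex: "\<not> smallc e (L i (real (nat \<lceil>1/g\<rceil>) * g))" for i
  proof -
    have "real (nat \<lceil>1/g\<rceil>) * g \<ge> (1/g) * g"
      by (rule mult_right_mono) (use g in auto)
    then have "real (nat \<lceil>1/g\<rceil>) * g \<ge> 1" using g by simp
    then have "L i (real (nat \<lceil>1/g\<rceil>) * g) = S" unfolding L_def using S01 by (auto) (meson atLeastAtMost_iff order_trans)
    then show ?thesis using big by simp
  qed
  have KL: "\<not> smallc e (L i (real (K i) * g))" for i
    unfolding K_def by (rule LeastI[of _ "nat \<lceil>1/g\<rceil>"]) (rule ex)
  have A: "smallc e {q\<in>S. q i \<le> (real (K i) - 1) * g}" for i
  proof (cases "K i")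
    case 0
    have "{q\<in>S. q i \<le> (real (K i) - 1) * g} = {}"
    proof (intro equals0I)
      fix q assume "q \<in> {q\<in>S. q i \<le> (real (K i) - 1) * g}"
      then have "q i \<ge> 0" "q i \<le> - g" using S01 0 by auto
      then show False using g by linarith
    qed
    then show ?thesis by (metis small_empty)
  next
    case (Suc m)
    have "m < K i" using Suc by simp
    then have "smallc e (L i (real m * g))" unfolding K_def using not_less_Least by blast
    then show ?thesis using Suc unfolding L_def by simp
  qed
  have B: "smallc e {q\<in>S. q i \<ge> (real (K i) + 2) * g}" for i
  proof (cases "(real (K i) + 1) * g < 1")
    case True
    have "(real (K i) + 1) * g > 0" using g by simp
    with True have "smallc e {q\<in>S. q i \<le> (real (K i) + 1) * g - g} \<or> smallc e {q\<in>S. q i \<ge> (real (K i) + 1) * g + g}"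
      using H by simp
    moreover have "(real (K i) + 1) * g - g = real (K i) * g" "(real (K i) + 1) * g + g = (real (K i) + 2) * g"
      by (simp_all add: algebra_simps)
    ultimately show ?thesis using KL unfolding L_def by auto
  next
    case False
    have "{q\<in>S. q i \<ge> (real (K i) + 2) * g} = {}"
    proof (intro equals0I)
      fix q assume "q \<in> {q\<in>S. q i \<ge> (real (K i) + 2) * g}"
      then have "q i \<le> 1" "q i \<ge> (real (K i) + 1) * g + g" using S01
        by (auto simp: algebra_simps)
      then show False using g False by linarith
    qed
    then show ?thesis by (metis small_empty)
  qed
  define c where "c i = min 1 ((real (K i) + 1/2) * g)" for i
  define R where "R = {q\<in>S. \<forall>i. (real (K i) - 1) * g < q i \<and> q i < (real (K i) + 2) * g}"
  have "smallc e R"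
  proof (rule small_point[where t = "3/2 * g"])
    show "\<forall>j. c j \<in> {0..1}" unfolding c_def using g by auto
    show "3/2 * g < e" using g_def e by simp
    fix q j assume "q \<in> R"
    then have q: "(real (K j) - 1) * g < q j" "q j < (real (K j) + 2) * g" "q j \<in> {0..1}"
      unfolding R_def using S01 by auto
    define m where "m = (real (K j) + 1/2) * g"
    have m: "m - 3/2*g < q j" "q j < m + 3/2*g" using q(1,2) unfolding m_def
      by (simp_all add: algebra_simps)
    show "\<bar>q j - c j\<bar> \<le> 3/2 * g"
    proof (cases "1 \<le> m")
      case True
      then have "c j = 1" unfolding c_def m_def by simp
      then show ?thesis using m q(3) True g by (simp only: abs_le_iff atLeastAtMost_iff) linarith
    next
      case False
      then have "c j = m" unfolding c_def m_def by simp
      then show ?thesis using m by (simp only: abs_le_iff) linarith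
    qed
  qed
  moreover have "S \<subseteq> (\<Union>i. {q\<in>S. q i \<le> (real (K i) - 1) * g}) \<union> (\<Union>i. {q\<in>S. q i \<ge> (real (K i) + 2) * g}) \<union> R"
  proof
    fix q assume qS: "q \<in> S"
    show "q \<in> (\<Union>i. {q\<in>S. q i \<le> (real (K i) - 1) * g}) \<union> (\<Union>i. {q\<in>S. q i \<ge> (real (K i) + 2) * g}) \<union> R"
    proof (cases "q \<in> R")
      case True then show ?thesis by blast
    next
      case False
      then obtain i where "\<not> ((real (K i) - 1) * g < q i \<and> q i < (real (K i) + 2) * g)"
        using qS unfolding R_def by blast
      then have "q i \<le> (real (K i) - 1) * g \<or> q i \<ge> (real (K i) + 2) * g" by linarith
      then show ?thesis using qS by blast
    qed
  qed
  moreover have "smallc e ((\<Union>i. {q\<in>S. q i \<le> (real (K i) - 1) * g}) \<union> (\<Union>i. {q\<in>S. q i \<ge> (real (K i) + 2) * g}) \<union> R)"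
    by (intro small_Un small_UN A B) fact
  ultimately have "smallc e S" by (meson small_sub)
  then show False using big by simp
qed

lemma tree:
  assumes e: "e > 0"
  shows "\<forall>S. (\<forall>q\<in>S. \<forall>j. q j \<in> {0..1}) \<and> \<not> smallc e S \<longrightarrow> (\<exists>i r. shattered_tree S (e/4) d i r)"
proof (induction d)
  case 0
  show ?case
  proof (intro allI impI)
    fix S :: "(nat \<Rightarrow> real) set"
    assume "(\<forall>q\<in>S. \<forall>j. q j \<in> {0..1}) \<and> \<not> smallc e S"
    then have "S \<noteq> {}" using small_empty by auto
    then show "\<exists>i r. shattered_tree S (e/4) 0 i r"
      unfolding shattered_tree_def by auto
  qed
next
  case (Suc d)
  show ?case
  proof (intro allI impI)
    fix S :: "(nat \<Rightarrow> real) set"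
    assume SS: "(\<forall>q\<in>S. \<forall>j. q j \<in> {0..1}) \<and> \<not> smallc e S"
    then obtain i0 r0 where r0: "r0 \<in> {0<..<1}"
      and b0: "\<not> smallc e {q\<in>S. q i0 \<le> r0 - e/4}"
      and b1: "\<not> smallc e {q\<in>S. q i0 \<ge> r0 + e/4}"
      using split[OF e] by blast
    obtain i0' r0' where t0: "shattered_tree {q\<in>S. q i0 \<le> r0 - e/4} (e/4) d i0' r0'"
    proof -
      have "\<forall>q\<in>{q\<in>S. q i0 \<le> r0 - e/4}. \<forall>j. q j \<in> {0..1}" using SS by blast
      then show ?thesis using Suc.IH[rule_format, OF conjI[OF _ b0]] that by blast
    qed
    obtain i1' r1' where t1: "shattered_tree {q\<in>S. q i0 \<ge> r0 + e/4} (e/4) d i1' r1'"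
    proof -
      have "\<forall>q\<in>{q\<in>S. q i0 \<ge> r0 + e/4}. \<forall>j. q j \<in> {0..1}" using SS by blast
      then show ?thesis using Suc.IH[rule_format, OF conjI[OF _ b1]] that by blast
    qed
    define I where "I v = (case v of [] \<Rightarrow> i0 | x # w \<Rightarrow> if x then i1' w else i0' w)" for v
    define R where "R v = (case v of [] \<Rightarrow> r0 | x # w \<Rightarrow> if x then r1' w else r0' w)" for v
    have "shattered_tree S (e/4) (Suc d) I R"
      unfolding shattered_tree_def
    proof (intro conjI allI impI)
      fix v :: "bool list" assume "length v < Suc d"
      then show "R v \<in> {0<..<1}"
        using r0 t0 t1 unfolding shattered_tree_def R_def by (cases v) auto
    next
      fix b :: "bool list" assume lb: "length b = Suc d"
      then obtain x w where bw: "b = x # w" "length w = d" by (cases b) auto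
      show "\<exists>q\<in>S. \<forall>k<Suc d.
            (\<not> b ! k \<longrightarrow> q (I (take k b)) \<le> R (take k b) - e/4) \<and>
            (b ! k \<longrightarrow> q (I (take k b)) \<ge> R (take k b) + e/4)"
      proof (cases x)
        case True
        obtain q where q: "q \<in> {q\<in>S. q i0 \<ge> r0 + e/4}" and
          qk: "\<forall>k<d. (\<not> w ! k \<longrightarrow> q (i1' (take k w)) \<le> r1' (take k w) - e/4) \<and>
            (w ! k \<longrightarrow> q (i1' (take k w)) \<ge> r1' (take k w) + e/4)"
          using t1 bw unfolding shattered_tree_def by blast
        show ?thesis
        proof (intro bexI[of _ q] allI impI)
          show "q \<in> S" using q by simp
          fix k assume "k < Suc d"
          then show "(\<not> b ! k \<longrightarrow> q (I (take k b)) \<le> R (take k b) - e/4) \<and>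
            (b ! k \<longrightarrow> q (I (take k b)) \<ge> R (take k b) + e/4)"
            using q qk True bw unfolding I_def R_def by (cases k) auto
        qed
      next
        case False
        obtain q where q: "q \<in> {q\<in>S. q i0 \<le> r0 - e/4}" and
          qk: "\<forall>k<d. (\<not> w ! k \<longrightarrow> q (i0' (take k w)) \<le> r0' (take k w) - e/4) \<and>
            (w ! k \<longrightarrow> q (i0' (take k w)) \<ge> r0' (take k w) + e/4)"
          using t0 bw unfolding shattered_tree_def by blast
        show ?thesis
        proof (intro bexI[of _ q] allI impI)
          show "q \<in> S" using q by simp
          fix k assume "k < Suc d"
          then show "(\<not> b ! k \<longrightarrow> q (I (take k b)) \<le> R (take k b) - e/4) \<and>
            (b ! k \<longrightarrow> q (I (take k b)) \<ge> R (take k b) + e/4)"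
            using q qk False bw unfolding I_def R_def by (cases k) auto
        qed
      qed
    qed
    then show "\<exists>i r. shattered_tree S (e/4) (Suc d) i r" by blast
  qed
qed

lemma Mean01:
  assumes "\<mu> \<in> prob_measures_cantor" shows "Mean \<mu> j \<in> {0..1}"
proof -
  interpret prob_space \<mu> using assms unfolding prob_measures_cantor_def by auto
  let ?f = "\<lambda>x. if x j then 1 else 0 :: real"
  have "0 \<le> integral\<^sup>L \<mu> ?f" by (rule integral_nonneg_AE) auto
  moreover have "integral\<^sup>L \<mu> ?f \<le> 1"
  proof (cases "integrable \<mu> ?f")
    case True
    have "integral\<^sup>L \<mu> ?f \<le> integral\<^sup>L \<mu> (\<lambda>_. 1::real)"
      by (rule integral_mono) (use True in auto)
    then show ?thesis using prob_space by simp
  next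
    case False then show ?thesis by (simp add: not_integrable_integral_eq)
  qed
  ultimately show ?thesis unfolding Mean_def by simp
qed

theorem mainTheorem12:
  fixes Q :: "(nat \<Rightarrow> bool) measure set"
  assumes "Q \<subseteq> prob_measures_cantor"
    and "non_separable_in_means Q"
  shows "\<exists>\<gamma>>0. inf_seq_fat_shattered \<gamma> (Mean ` Q)"
proof -
  obtain e where e: "e > 0" and ns: "\<not> smallc e (Mean ` Q)"
    using assms(2) unfolding non_separable_in_means_def smallc_def by blast
  have "\<forall>q\<in>Mean ` Q. \<forall>j. q j \<in> {0..1}" using assms(1) Mean01 by blast
  then have "inf_seq_fat_shattered (e/4) (Mean ` Q)"
    unfolding inf_seq_fat_shattered_def using tree[OF e] ns by blast
  then show ?thesis using e by (intro exI[of _ "e/4"]) simp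
qed

end
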